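(* Let $\Xi$ be an orthogonally invariant FQ operation (scalar, vectorial, or pseudoscalar) and let $\tilde p^{[s]}_{i_1,\dots,i_r}$ denote its coefficients in the circular basis, where $s\in\{0\}$ (scalar), $s\in\{1,2\}$ (the two components of a vectorial operation) or $s=12$ (pseudoscalar). Let $\iota=(i_1,\dots,i_r)$ with all $i_j\in\{4,5\}$, and put $d=\mathrm{Mult}^4_\iota-\mathrm{Mult}^5_\iota$, where $\mathrm{Mult}^x_\iota$ is the number of occurrences of $x$ in $\iota$. If $d\neq 0$, and moreover either $s\in\{0,12\}$ or $d\neq 1$, then $\tilde p^{[s]}_{i_1,\dots,i_r}=0$. (Thus the only coefficients of this kind not forced to vanish by orthogonal invariance are those with $d=0$, any $s$, and those with $d=1$, $s\in\{1,2\}$.)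
   Context: Setting. $(Q_1,Q_2)$ is a Clifford system: $Q_1^2=Q_2^2=-1$, $Q_1Q_2=-Q_2Q_1$. $R_1,R_2$ are formal noncommuting infinitesimal variables; one works in the real algebra generated by $Q_1,Q_2,R_1,R_2$ (free apart from the Clifford relations), completed with respect to total degree in $R_1,R_2$, or in extensions of it by further formal infinitesimal elements. Put $A_i=Q_i+R_i$. For $Q$ with $Q^2=-1$ and any $X$ put $X^0_Q=\frac12(X+Q^{-1}XQ)$, $X^1_Q=\frac12(X-Q^{-1}XQ)$. The split variables are $r_1,\dots,r_8$: for $j\in\{1,2\}$, $\iota_1,\iota_2\in\{0,1\}$, $r_{4(j-1)+2\iota_1+\iota_2+1}=((R_jQ_j^{-1})^{\iota_1}_{Q_1})^{\iota_2}_{Q_2}$ (so $r_k$ commutes with $Q_m$ if $\iota_m=0$ and anticommutes if $\iota_m=1$). An FQ operation around $(Q_1,Q_2)$ is given by formal real noncommutative power series in eight variables: scalar $\Xi(A_1,A_2)=f_0(r_1,\dots,r_8)$, vectorial $\Xi(A_1,A_2)=(f_1(r)Q_1,f_2(r)Q_2)$, pseudoscalar $\Xi(A_1,A_2)=f_{12}(r)Q_1Q_2$; the operation is identified with this family of series. The same series can be evaluated relative to any other Clifford system $(Q_1',Q_2')$ at $(A_1',A_2')$ with $A'_i-Q'_i$ infinitesimal, by forming the split variables of $A_i'-Q_i'$ relative to $(Q'_1,Q'_2)$ and multiplying by $Q'_s$. Mixed basis: $\hat r_1=\frac12(r_2-r_7)$, $\hat r_2=\frac12(r_2+r_7)$,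 $\hat r_3=\frac12(r_1+r_5)$, $\hat r_4=\frac12(r_1-r_5)$, $\hat r_5=\frac12(r_4-r_8)$, $\hat r_6=\frac12(r_4+r_8)$, $\hat r_7=\frac12(r_3+r_6)$, $\hat r_8=\frac12(r_3-r_6)$. Circular basis: $\tilde r_i=\hat r_i$ for $i\notin\{4,5\}$, $\tilde r_4=\hat r_4+\hat r_5$, $\tilde r_5=\hat r_4-\hat r_5$. Rewriting $f_s$ as a noncommutative power series in $\tilde r_1,\dots,\tilde r_8$, $\tilde p^{[s]}_{i_1,\dots,i_r}$ is the coefficient of $\tilde r_{i_1}\cdots\tilde r_{i_r}$. Orthogonal invariance: let $t$ be a central formal variable with $t^2=0$ and $\mathrm{Rot}_t(B_1,B_2)=(B_1+tB_2,\,B_2-tB_1)$ (then $\mathrm{Rot}_t(Q_1,Q_2)$ is again a Clifford system). A (pseudo)scalar $\Xi$ is orthogonally invariant if $\Xi_{(Q_1,Q_2)}(A_1,A_2)=\Xi_{\mathrm{Rot}_t(Q_1,Q_2)}(\mathrm{Rot}_t(A_1,A_2))$; a vectorial $\Xi$ is orthogonally invariant if $\mathrm{Rot}_t(\Xi_{(Q_1,Q_2)}(A_1,A_2))=\Xi_{\mathrm{Rot}_t(Q_1,Q_2)}(\mathrm{Rot}_t(A_1,A_2))$; here the subscript indicates the base Clifford system relative to which the series is evaluated. *)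

theory Defs
  imports Complex_Main
begin

text \<open>
  Model of the real algebra generated by a Clifford system (Q1,Q2) and formal
  infinitesimals, completed w.r.t. the degree in the infinitesimals, extended by a
  central t with t^2 = 0.  Every element is written uniquely as a (possibly infinite)
  sum  c(tau,w,a,b) * t^tau * g_w * Q1^a * Q2^b,  where w is a word in generators g_k
  (k a natural number; g_1..g_8 will be the split variables of the generic R1, R2),
  tau, a, b are booleans (exponent 0 or 1).  The generator g_k commutes with Q_m or
  anticommutes with Q_m according to the bits iota_m of k, exactly as the split variable
  r_k does.  Restricted to tau = False and letters 1..8 this is (isomorphic to) the
  completed algebra freely generated by Q1,Q2,R1,R2 modulo the Clifford relations.
\<close>

type_synonym fq_el = "bool \<Rightarrow> nat list \<Rightarrow> bool \<Rightarrow> bool \<Rightarrow> real"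

definition io1 :: "nat \<Rightarrow> nat" where "io1 k = ((k - 1) mod 4) div 2"
definition io2 :: "nat \<Rightarrow> nat" where "io2 k = (k - 1) mod 2"

definition bn :: "bool \<Rightarrow> nat" where "bn p = (if p then 1 else 0)"

text \<open>sign produced by moving Q1^a1 Q2^b1 to the right past the word v and then
  normalising Q1^a1 Q2^b1 Q1^a2 Q2^b2 using Q1^2 = Q2^2 = -1, Q1 Q2 = - Q2 Q1.\<close>
definition mul_sign :: "bool \<Rightarrow> bool \<Rightarrow> nat list \<Rightarrow> bool \<Rightarrow> bool \<Rightarrow> real" where
  "mul_sign a1 b1 v a2 b2 =
     (-1) ^ (bn a1 * sum_list (map io1 v) + bn b1 * sum_list (map io2 v)
             + bn b1 * bn a2 + bn a1 * bn a2 + bn b1 * bn b2)"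

definition mulc :: "fq_el \<Rightarrow> fq_el \<Rightarrow> bool \<Rightarrow> bool \<Rightarrow> nat list \<Rightarrow> bool \<Rightarrow> bool \<Rightarrow> real" where
  "mulc x y t1 t2 w a b =
     (\<Sum>k\<in>{0..length w}. \<Sum>a1\<in>(UNIV::bool set). \<Sum>b1\<in>(UNIV::bool set).
        x t1 (take k w) a1 b1 * y t2 (drop k w) (a \<noteq> a1) (b \<noteq> b1)
        * mul_sign a1 b1 (drop k w) (a \<noteq> a1) (b \<noteq> b1))"

definition fq_mul :: "fq_el \<Rightarrow> fq_el \<Rightarrow> fq_el" (infixl "\<star>" 70) where
  "fq_mul x y = (\<lambda>tau w a b. if tau then mulc x y False True w a b + mulc x y True False w a b
                              else mulc x y False False w a b)"

definition fq_add :: "fq_el \<Rightarrow> fq_el \<Rightarrow> fq_el" (infixl "\<oplus>" 65) where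
  "fq_add x y = (\<lambda>tau w a b. x tau w a b + y tau w a b)"

definition fq_smul :: "real \<Rightarrow> fq_el \<Rightarrow> fq_el" where
  "fq_smul c x = (\<lambda>tau w a b. c * x tau w a b)"

definition fq_sub :: "fq_el \<Rightarrow> fq_el \<Rightarrow> fq_el" (infixl "\<ominus>" 65) where
  "fq_sub x y = (\<lambda>tau w a b. x tau w a b - y tau w a b)"

definition fq_one :: fq_el where
  "fq_one = (\<lambda>tau w a b. if \<not> tau \<and> w = [] \<and> \<not> a \<and> \<not> b then 1 else 0)"

definition fq_t :: fq_el where
  "fq_t = (\<lambda>tau w a b. if tau \<and> w = [] \<and> \<not> a \<and> \<not> b then 1 else 0)"

definition fq_Q1 :: fq_el where
  "fq_Q1 = (\<lambda>tau w a b. if \<not> tau \<and> w = [] \<and> a \<and> \<not> b then 1 else 0)"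

definition fq_Q2 :: fq_el where
  "fq_Q2 = (\<lambda>tau w a b. if \<not> tau \<and> w = [] \<and> \<not> a \<and> b then 1 else 0)"

definition fq_gen :: "nat \<Rightarrow> fq_el" where
  "fq_gen k = (\<lambda>tau w a b. if \<not> tau \<and> w = [k] \<and> \<not> a \<and> \<not> b then 1 else 0)"

definition fq_R1 :: fq_el where
  "fq_R1 = (fq_gen 1 \<oplus> fq_gen 2 \<oplus> fq_gen 3 \<oplus> fq_gen 4) \<star> fq_Q1"
definition fq_R2 :: fq_el where
  "fq_R2 = (fq_gen 5 \<oplus> fq_gen 6 \<oplus> fq_gen 7 \<oplus> fq_gen 8) \<star> fq_Q2"

definition fq_A1 :: fq_el where "fq_A1 = fq_Q1 \<oplus> fq_R1"
definition fq_A2 :: fq_el where "fq_A2 = fq_Q2 \<oplus> fq_R2"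

text \<open>For Q with Q^2 = -1 the inverse is -Q.\<close>
definition cinv :: "fq_el \<Rightarrow> fq_el" where "cinv Q = fq_smul (-1) Q"

definition part0 :: "fq_el \<Rightarrow> fq_el \<Rightarrow> fq_el" where
  "part0 Q X = fq_smul (1/2) (X \<oplus> (cinv Q \<star> X \<star> Q))"
definition part1 :: "fq_el \<Rightarrow> fq_el \<Rightarrow> fq_el" where
  "part1 Q X = fq_smul (1/2) (X \<ominus> (cinv Q \<star> X \<star> Q))"

definition part :: "nat \<Rightarrow> fq_el \<Rightarrow> fq_el \<Rightarrow> fq_el" where
  "part i Q X = (if i = 0 then part0 Q X else part1 Q X)"

text \<open>split_var Q1 Q2 R1 R2 k = r_k, for k = 4(j-1) + 2 iota1 + iota2 + 1\<close>
definition split_var :: "fq_el \<Rightarrow> fq_el \<Rightarrow> fq_el \<Rightarrow> fq_el \<Rightarrow> nat \<Rightarrow> fq_el" where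
  "split_var Q1 Q2 R1 R2 k =
     (let j = (k - 1) div 4;
          X = (if j = 0 then R1 \<star> cinv Q1 else R2 \<star> cinv Q2)
      in part (io2 k) Q2 (part (io1 k) Q1 X))"

text \<open>A series is its coefficient function on words over the letters 1..8
  (values on other words are irrelevant).\<close>
type_synonym ncseries = "nat list \<Rightarrow> real"

definition words_upto :: "nat \<Rightarrow> nat list set" where
  "words_upto n = {u. set u \<subseteq> {1..8} \<and> length u \<le> n}"

definition fq_prod :: "fq_el list \<Rightarrow> fq_el" where
  "fq_prod xs = foldr fq_mul xs fq_one"

text \<open>Evaluation of a series at infinitesimal arguments x_1..x_8 (no component on the
  empty word): the coefficient at word w only receives contributions from words u with
  length u \<le> length w, so the infinite sum is coefficientwise finite.\<close>
definition ser_eval :: "ncseries \<Rightarrow> (nat \<Rightarrow> fq_el) \<Rightarrow> fq_el" where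
  "ser_eval f x = (\<lambda>tau w a b.
      \<Sum>u\<in>words_upto (length w). f u * fq_prod (map x u) tau w a b)"

definition ser_at :: "ncseries \<Rightarrow> fq_el \<Rightarrow> fq_el \<Rightarrow> fq_el \<Rightarrow> fq_el \<Rightarrow> fq_el" where
  "ser_at f Q1 Q2 A1 A2 = ser_eval f (split_var Q1 Q2 (A1 \<ominus> Q1) (A2 \<ominus> Q2))"

definition rot :: "fq_el \<times> fq_el \<Rightarrow> fq_el \<times> fq_el" where
  "rot B = (fst B \<oplus> (fq_t \<star> snd B), snd B \<ominus> (fq_t \<star> fst B))"

datatype fqop = Scalar ncseries | Vectorial ncseries ncseries | Pseudoscalar ncseries

definition orth_inv :: "fqop \<Rightarrow> bool" where
  "orth_inv Xi =
    (let Q = (fq_Q1, fq_Q2); A = (fq_A1, fq_A2);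
         Q' = rot Q; A' = rot A;
         ev = (\<lambda>f QQ AA. ser_at f (fst QQ) (snd QQ) (fst AA) (snd AA))
     in case Xi of
       Scalar f \<Rightarrow> ev f Q A = ev f Q' A'
     | Vectorial f1 f2 \<Rightarrow>
         rot (ev f1 Q A \<star> fst Q, ev f2 Q A \<star> snd Q) = (ev f1 Q' A' \<star> fst Q', ev f2 Q' A' \<star> snd Q')
     | Pseudoscalar f \<Rightarrow> ev f Q A \<star> (fst Q \<star> snd Q) = ev f Q' A' \<star> (fst Q' \<star> snd Q'))"

fun components :: "fqop \<Rightarrow> nat set" where
  "components (Scalar f) = {0}"
| "components (Vectorial f1 f2) = {1, 2}"
| "components (Pseudoscalar f) = {12}"

fun series :: "fqop \<Rightarrow> nat \<Rightarrow> ncseries" where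
  "series (Scalar f) s = f"
| "series (Vectorial f1 f2) s = (if s = 1 then f1 else f2)"
| "series (Pseudoscalar f) s = f"

text \<open>hatT j k: coefficient of r_k in \<hat>r_j (mixed basis)\<close>
definition hatT :: "nat \<Rightarrow> nat \<Rightarrow> real" where
  "hatT j k = (if j = 1 then (if k = 2 then 1/2 else if k = 7 then -1/2 else 0)
     else if j = 2 then (if k = 2 then 1/2 else if k = 7 then 1/2 else 0)
     else if j = 3 then (if k = 1 then 1/2 else if k = 5 then 1/2 else 0)
     else if j = 4 then (if k = 1 then 1/2 else if k = 5 then -1/2 else 0)
     else if j = 5 then (if k = 4 then 1/2 else if k = 8 then -1/2 else 0)
     else if j = 6 then (if k = 4 then 1/2 else if k = 8 then 1/2 else 0)
     else if j = 7 then (if k = 3 then 1/2 else if k = 6 then 1/2 else 0)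
     else if j = 8 then (if k = 3 then 1/2 else if k = 6 then -1/2 else 0)
     else 0)"

text \<open>circT j l: coefficient of \<hat>r_l in \<tilde>r_j\<close>
definition circT :: "nat \<Rightarrow> nat \<Rightarrow> real" where
  "circT j l = (if j = 4 then (if l = 4 then 1 else if l = 5 then 1 else 0)
     else if j = 5 then (if l = 4 then 1 else if l = 5 then -1 else 0)
     else if j = l \<and> j \<in> {1..8} then 1 else 0)"

text \<open>coefficient of r_k in \<tilde>r_j\<close>
definition circ_of_r :: "nat \<Rightarrow> nat \<Rightarrow> real" where
  "circ_of_r j k = (\<Sum>l\<in>{1..8}. circT j l * hatT l k)"

text \<open>r_of_circ k j: coefficient of \<tilde>r_j in r_k (inverse change of variables)\<close>
definition r_of_circ :: "nat \<Rightarrow> nat \<Rightarrow> real" where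
  "r_of_circ k j = (if k = 1 then (if j = 3 then 1 else if j = 4 then 1/2 else if j = 5 then 1/2 else 0)
     else if k = 2 then (if j = 1 then 1 else if j = 2 then 1 else 0)
     else if k = 3 then (if j = 7 then 1 else if j = 8 then 1 else 0)
     else if k = 4 then (if j = 4 then 1/2 else if j = 5 then -1/2 else if j = 6 then 1 else 0)
     else if k = 5 then (if j = 3 then 1 else if j = 4 then -1/2 else if j = 5 then -1/2 else 0)
     else if k = 6 then (if j = 7 then 1 else if j = 8 then -1 else 0)
     else if k = 7 then (if j = 1 then -1 else if j = 2 then 1 else 0)
     else if k = 8 then (if j = 4 then -1/2 else if j = 5 then 1/2 else if j = 6 then 1 else 0)
     else 0)"

lemma r_of_circ_inverse:
  assumes "j \<in> {1..8}" "l \<in> {1..8}"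
  shows "(\<Sum>k\<in>{1..8}. circ_of_r j k * r_of_circ k l) = (if j = l then 1 else 0)"
proof -
  have e: "{1..8::nat} = {1,2,3,4,5,6,7,8}" by auto
  from assms have "j \<in> {1,2,3,4,5,6,7,8}" "l \<in> {1,2,3,4,5,6,7,8}" by (simp_all only: e)
  then show ?thesis
    by (simp only: e circ_of_r_def) (auto simp: circT_def hatT_def r_of_circ_def)
qed

text \<open>Coefficient \<tilde>p_u of \<tilde>r_{u_1}...\<tilde>r_{u_r} after rewriting f in the circular basis:
  substituting r_k = \<Sum>_j r_of_circ k j \<tilde>r_j into \<Sum>_w f_w r_w.\<close>
definition ptilde :: "ncseries \<Rightarrow> nat list \<Rightarrow> real" where
  "ptilde f u = (\<Sum>w\<in>{w. set w \<subseteq> {1..8} \<and> length w = length u}.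
                   f w * (\<Prod>i<length u. r_of_circ (w ! i) (u ! i)))"

definition Mult_diff :: "nat list \<Rightarrow> int" where
  "Mult_diff u = int (count_list u 4) - int (count_list u 5)"

end

theory Submission
  imports Defs
begin

definition el0 :: "(bool \<Rightarrow> bool \<Rightarrow> bool \<Rightarrow> real) \<Rightarrow> fq_el" where
  "el0 e = (\<lambda>tau w a b. if w = [] then e tau a b else 0)"
definition el1 :: "(bool \<Rightarrow> bool \<Rightarrow> bool \<Rightarrow> nat \<Rightarrow> real) \<Rightarrow> fq_el" where
  "el1 h = (\<lambda>tau w a b. case w of [c] \<Rightarrow> h tau a b c | _ \<Rightarrow> 0)"

lemma el1_simps[simp]: "el1 h t [] a b = 0" "el1 h t [c] a b = h t a b c" "el1 h t (c#d#w) a b = 0"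
  by (auto simp: el1_def)
lemma el0_simps[simp]: "el0 e t [] a b = e t a b" "el0 e t (c#w) a b = 0"
  by (auto simp: el0_def)

lemma mulc_el0_left:
  "mulc (el0 e) y t1 t2 w a b = (\<Sum>a1\<in>UNIV. \<Sum>b1\<in>UNIV. e t1 a1 b1 * y t2 w (a \<noteq> a1) (b \<noteq> b1)
        * mul_sign a1 b1 w (a \<noteq> a1) (b \<noteq> b1))" (is "_ = ?r")
proof -
  have "mulc (el0 e) y t1 t2 w a b = (\<Sum>k\<in>{0..length w}. (if k = 0 then (\<Sum>a1\<in>UNIV. \<Sum>b1\<in>UNIV. e t1 a1 b1 * y t2 w (a \<noteq> a1) (b \<noteq> b1)
        * mul_sign a1 b1 w (a \<noteq> a1) (b \<noteq> b1)) else 0))"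
    unfolding mulc_def
    apply (rule sum.cong[OF refl])
    by (cases w) (auto simp: el0_def)
  also have "\<dots> = ?r" by (simp add: sum.delta)
  finally show ?thesis .
qed

lemma mulc_el0_right:
  "mulc x (el0 e) t1 t2 w a b = (\<Sum>a1\<in>UNIV. \<Sum>b1\<in>UNIV. x t1 w a1 b1 * e t2 (a \<noteq> a1) (b \<noteq> b1)
        * mul_sign a1 b1 [] (a \<noteq> a1) (b \<noteq> b1))" (is "_ = ?r")
proof -
  have "mulc x (el0 e) t1 t2 w a b = (\<Sum>k\<in>{0..length w}. (if k = length w then (\<Sum>a1\<in>UNIV. \<Sum>b1\<in>UNIV. x t1 w a1 b1 * e t2 (a \<noteq> a1) (b \<noteq> b1)
        * mul_sign a1 b1 [] (a \<noteq> a1) (b \<noteq> b1)) else 0))"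
    unfolding mulc_def
    apply (rule sum.cong[OF refl])
    by (cases w) (auto simp: el0_def)
  also have "\<dots> = ?r" by (simp add: sum.delta)
  finally show ?thesis .
qed

lemma mulc_el1_left_Nil: "mulc (el1 h) y t1 t2 [] a b = 0"
  by (simp add: mulc_def)

lemma el1_take: "k \<le> Suc (length w) \<Longrightarrow> el1 h t (take k (c#w)) a b = (if k = 1 then h t a b c else 0)"
proof (cases k)
  case (Suc k') then show "k \<le> Suc (length w) \<Longrightarrow> ?thesis" by (cases k'; cases w) auto
qed simp

lemma mulc_el1_left_Cons:
  "mulc (el1 h) y t1 t2 (c#w) a b = (\<Sum>a1\<in>UNIV. \<Sum>b1\<in>UNIV. h t1 a1 b1 c * y t2 w (a \<noteq> a1) (b \<noteq> b1)
        * mul_sign a1 b1 w (a \<noteq> a1) (b \<noteq> b1))" (is "_ = ?r")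
proof -
  have "mulc (el1 h) y t1 t2 (c#w) a b = (\<Sum>k\<in>{0..length (c#w)}. (if k = 1 then (\<Sum>a1\<in>UNIV. \<Sum>b1\<in>UNIV. h t1 a1 b1 c * y t2 w (a \<noteq> a1) (b \<noteq> b1)
        * mul_sign a1 b1 w (a \<noteq> a1) (b \<noteq> b1)) else 0))"
    unfolding mulc_def
    apply (rule sum.cong[OF refl])
    subgoal for k by (cases "k = 1") (auto simp: el1_take)
    done
  also have "\<dots> = ?r" by (cases w) (auto simp: sum.delta Suc_le_eq)
  finally show ?thesis .
qed


lemma sum_UNIV_bool: "(\<Sum>x\<in>(UNIV::bool set). f x) = f False + f True"
  by (simp add: UNIV_bool)

definition mL where "mL e h tau a b c = fq_mul (el0 e) (el1 h) tau [c] a b"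
definition mR where "mR h e tau a b c = fq_mul (el1 h) (el0 e) tau [c] a b"
definition m0 where "m0 e e' tau a b = fq_mul (el0 e) (el0 e') tau [] a b"

lemma el0_mul_el1: "el0 e \<star> el1 h = el1 (mL e h)"
  apply (rule ext)+
  subgoal for tau w a b
    by (cases w rule: remdups_adj.cases) (auto simp: mL_def fq_mul_def mulc_el0_left)
  done

lemma el1_mul_el0: "el1 h \<star> el0 e = el1 (mR h e)"
  apply (rule ext)+
  subgoal for tau w a b
    by (cases w rule: remdups_adj.cases) (auto simp: mR_def fq_mul_def mulc_el0_right)
  done

lemma el0_mul_el0: "el0 e \<star> el0 e' = el0 (m0 e e')"
  apply (rule ext)+
  subgoal for tau w a b
    by (cases w) (auto simp: m0_def fq_mul_def mulc_el0_right)
  done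

lemma el1_add: "el1 h \<oplus> el1 h' = el1 (\<lambda>tau a b c. h tau a b c + h' tau a b c)"
  by (rule ext)+ (auto simp: fq_add_def el1_def split: list.splits)
lemma el1_sub: "el1 h \<ominus> el1 h' = el1 (\<lambda>tau a b c. h tau a b c - h' tau a b c)"
  by (rule ext)+ (auto simp: fq_sub_def el1_def split: list.splits)
lemma el1_smul: "fq_smul r (el1 h) = el1 (\<lambda>tau a b c. r * h tau a b c)"
  by (rule ext)+ (auto simp: fq_smul_def el1_def split: list.splits)
lemma el0_add: "el0 h \<oplus> el0 h' = el0 (\<lambda>tau a b. h tau a b + h' tau a b)"
  by (rule ext)+ (auto simp: fq_add_def el0_def)
lemma el0_sub: "el0 h \<ominus> el0 h' = el0 (\<lambda>tau a b. h tau a b - h' tau a b)"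
  by (rule ext)+ (auto simp: fq_sub_def el0_def)
lemma el0_smul: "fq_smul r (el0 h) = el0 (\<lambda>tau a b. r * h tau a b)"
  by (rule ext)+ (auto simp: fq_smul_def el0_def)

lemma mulc_add_right: "mulc z (x \<oplus> y) t1 t2 w a b = mulc z x t1 t2 w a b + mulc z y t1 t2 w a b"
  by (simp add: mulc_def fq_add_def algebra_simps sum.distrib)
lemma fq_add_app: "(x \<oplus> y) tau w a b = x tau w a b + y tau w a b"
  by (simp add: fq_add_def)
lemma fq_sub_app: "(x \<ominus> y) tau w a b = x tau w a b - y tau w a b"
  by (simp add: fq_sub_def)
lemma fq_mul_add_right: "z \<star> (x \<oplus> y) = (z \<star> x) \<oplus> (z \<star> y)"
  by (rule ext)+ (simp add: fq_mul_def fq_add_app mulc_add_right)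

lemma Q1_el: "fq_Q1 = el0 (\<lambda>tau a b. if \<not> tau \<and> a \<and> \<not> b then 1 else 0)"
  by (rule ext)+ (auto simp: fq_Q1_def el0_def)
lemma Q2_el: "fq_Q2 = el0 (\<lambda>tau a b. if \<not> tau \<and> \<not> a \<and> b then 1 else 0)"
  by (rule ext)+ (auto simp: fq_Q2_def el0_def)
lemma t_el: "fq_t = el0 (\<lambda>tau a b. if tau \<and> \<not> a \<and> \<not> b then 1 else 0)"
  by (rule ext)+ (auto simp: fq_t_def el0_def)
lemma gen_el: "fq_gen k = el1 (\<lambda>tau a b c. if \<not> tau \<and> \<not> a \<and> \<not> b \<and> c = k then 1 else 0)"
  by (rule ext)+ (auto simp: fq_gen_def el1_def split: list.splits)

lemma cinv_el0: "cinv (el0 e) = el0 (\<lambda>tau a b. - e tau a b)"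
  by (simp add: cinv_def el0_smul)

lemma part_el: "part i (el0 e) (el1 h) = el1 (\<lambda>tau a b c. (1/2) * (h tau a b c +
   (if i = 0 then 1 else -1) * mR (mL (\<lambda>tau a b. - e tau a b) h) e tau a b c))"
  by (auto simp: part_def part0_def part1_def cinv_el0 el0_mul_el1 el1_mul_el0 el1_add el1_sub el1_smul)

lemma tab_ext:
  assumes "\<And>c. c = 1 \<or> c = 2 \<or> c = 3 \<or> c = 4 \<or> c = 5 \<or> c = 6 \<or> c = 7 \<or> c = 8 \<Longrightarrow> \<forall>tau a b. f tau a b c = g tau a b c"
    and "\<And>c. c \<noteq> 1 \<and> c \<noteq> 2 \<and> c \<noteq> 3 \<and> c \<noteq> 4 \<and> c \<noteq> 5 \<and> c \<noteq> 6 \<and> c \<noteq> 7 \<and> c \<noteq> 8 \<Longrightarrow> \<forall>tau a b. f tau a b c = g tau a b c"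
  shows "f = (g :: bool \<Rightarrow> bool \<Rightarrow> bool \<Rightarrow> nat \<Rightarrow> real)"
proof (intro ext)
  fix tau a b and c :: nat
  show "f tau a b c = g tau a b c"
    using assms[of c] by blast
qed

lemma c_cases: "(c::nat) \<in> {1..8} \<Longrightarrow> c = 1 \<or> c = 2 \<or> c = 3 \<or> c = 4 \<or> c = 5 \<or> c = 6 \<or> c = 7 \<or> c = 8"
  by auto

lemmas evsimps = mL_def mR_def m0_def fq_mul_def mulc_el0_left mulc_el0_right sum_UNIV_bool
  mul_sign_def bn_def io1_def io2_def

definition TR1 where "TR1 = (\<lambda>tau a b c. (if tau then (if a then (if b then 0 else 0) else (if b then 0 else 0)) else (if a then (if b then 0 else (if c = 1 then 1 else if c = 2 then 1 else if c = 3 then 1 else if c = 4 then 1 else 0)) else (if b then 0 else 0))))"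
definition TR2 where "TR2 = (\<lambda>tau a b c. (if tau then (if a then (if b then 0 else 0) else (if b then 0 else 0)) else (if a then (if b then 0 else 0) else (if b then (if c = 5 then 1 else if c = 6 then 1 else if c = 7 then 1 else if c = 8 then 1 else 0) else 0))))"
definition eQp1 where "eQp1 = (\<lambda>tau a b. (if tau then (if a then (if b then 0 else 0) else (if b then 1 else 0)) else (if a then (if b then 0 else 1) else (if b then 0 else 0))))"
definition eQp2 where "eQp2 = (\<lambda>tau a b. (if tau then (if a then (if b then 0 else (-1)) else (if b then 0 else 0)) else (if a then (if b then 0 else 0) else (if b then 1 else 0))))"
definition TRp1 where "TRp1 = (\<lambda>tau a b c. (if tau then (if a then (if b then 0 else 0) else (if b then (if c = 5 then 1 else if c = 6 then 1 else if c = 7 then 1 else if c = 8 then 1 else 0) else 0)) else (if a then (if b then 0 else (if c = 1 then 1 else if c = 2 then 1 else if c = 3 then 1 else if c = 4 then 1 else 0)) else (if b then 0 else 0))))"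
definition TRp2 where "TRp2 = (\<lambda>tau a b c. (if tau then (if a then (if b then 0 else (if c = 1 then (-1) else if c = 2 then (-1) else if c = 3 then (-1) else if c = 4 then (-1) else 0)) else (if b then 0 else 0)) else (if a then (if b then 0 else 0) else (if b then (if c = 5 then 1 else if c = 6 then 1 else if c = 7 then 1 else if c = 8 then 1 else 0) else 0))))"
definition TX1 where "TX1 = (\<lambda>tau a b c. (if tau then (if a then (if b then (if c = 1 then (-1) else if c = 2 then (-1) else if c = 3 then (-1) else if c = 4 then (-1) else if c = 5 then 1 else if c = 6 then 1 else if c = 7 then 1 else if c = 8 then 1 else 0) else 0) else (if b then 0 else 0)) else (if a then (if b then 0 else 0) else (if b then 0 else (if c = 1 then 1 else if c = 2 then 1 else if c = 3 then 1 else if c = 4 then 1 else 0)))))"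
definition TX2 where "TX2 = (\<lambda>tau a b c. (if tau then (if a then (if b then (if c = 1 then 1 else if c = 2 then 1 else if c = 3 then 1 else if c = 4 then 1 else if c = 5 then (-1) else if c = 6 then (-1) else if c = 7 then (-1) else if c = 8 then (-1) else 0) else 0) else (if b then 0 else 0)) else (if a then (if b then 0 else 0) else (if b then 0 else (if c = 5 then 1 else if c = 6 then 1 else if c = 7 then 1 else if c = 8 then 1 else 0)))))"
definition TY10 where "TY10 = (\<lambda>tau a b c. (if tau then (if a then (if b then (if c = 2 then (-1) else if c = 4 then (-1) else if c = 7 then 1 else if c = 8 then 1 else 0) else 0) else (if b then 0 else 0)) else (if a then (if b then 0 else 0) else (if b then 0 else (if c = 1 then 1 else if c = 2 then 1 else 0)))))"
definition TY11 where "TY11 = (\<lambda>tau a b c. (if tau then (if a then (if b then (if c = 1 then (-1) else if c = 3 then (-1) else if c = 5 then 1 else if c = 6 then 1 else 0) else 0) else (if b then 0 else 0)) else (if a then (if b then 0 else 0) else (if b then 0 else (if c = 3 then 1 else if c = 4 then 1 else 0)))))"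
definition TY20 where "TY20 = (\<lambda>tau a b c. (if tau then (if a then (if b then (if c = 3 then 1 else if c = 4 then 1 else if c = 6 then (-1) else if c = 8 then (-1) else 0) else 0) else (if b then 0 else 0)) else (if a then (if b then 0 else 0) else (if b then 0 else (if c = 5 then 1 else if c = 6 then 1 else 0)))))"
definition TY21 where "TY21 = (\<lambda>tau a b c. (if tau then (if a then (if b then (if c = 1 then 1 else if c = 2 then 1 else if c = 5 then (-1) else if c = 7 then (-1) else 0) else 0) else (if b then 0 else 0)) else (if a then (if b then 0 else 0) else (if b then 0 else (if c = 7 then 1 else if c = 8 then 1 else 0)))))"

definition cc :: "nat \<Rightarrow> nat \<Rightarrow> real" where
  "cc k c = (if k = 1 then (if c = 4 then -1 else if c = 8 then 1 else 0)
     else if k = 2 then (if c = 2 then -1 else if c = 7 then 1 else 0)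
     else if k = 3 then (if c = 3 then -1 else if c = 6 then 1 else 0)
     else if k = 4 then (if c = 1 then -1 else if c = 5 then 1 else 0)
     else if k = 5 then (if c = 8 then -1 else if c = 4 then 1 else 0)
     else if k = 6 then (if c = 6 then -1 else if c = 3 then 1 else 0)
     else if k = 7 then (if c = 7 then -1 else if c = 2 then 1 else 0)
     else if k = 8 then (if c = 5 then -1 else if c = 1 then 1 else 0) else 0)"

definition hk :: "(nat \<Rightarrow> nat \<Rightarrow> real) \<Rightarrow> nat \<Rightarrow> bool \<Rightarrow> bool \<Rightarrow> bool \<Rightarrow> nat \<Rightarrow> real" where
  "hk C k tau a b c = (if \<not> tau \<and> \<not> a \<and> \<not> b then (if c = k then 1 else 0)
      else if tau \<and> a \<and> b then C k c else 0)"


lemma TR1_eq: "fq_R1 = el1 TR1"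
  unfolding fq_R1_def gen_el el1_add Q1_el el1_mul_el0
  by (rule arg_cong[where f=el1], rule tab_ext; elim disjE conjE; simp add: all_bool_eq evsimps TR1_def)

lemma TR2_eq: "fq_R2 = el1 TR2"
  unfolding fq_R2_def gen_el el1_add Q2_el el1_mul_el0
  by (rule arg_cong[where f=el1], rule tab_ext; elim disjE conjE; simp add: all_bool_eq evsimps TR2_def)

lemma Qp1_eq: "fq_Q1 \<oplus> (fq_t \<star> fq_Q2) = el0 eQp1"
  unfolding Q1_el Q2_el t_el el0_mul_el0 el0_add
  by (rule arg_cong[where f=el0], (rule ext)+; auto simp: evsimps eQp1_def)

lemma Qp2_eq: "fq_Q2 \<ominus> (fq_t \<star> fq_Q1) = el0 eQp2"
  unfolding Q1_el Q2_el t_el el0_mul_el0 el0_sub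
  by (rule arg_cong[where f=el0], (rule ext)+; auto simp: evsimps eQp2_def)

lemma Rp1_eq: "(fq_A1 \<oplus> (fq_t \<star> fq_A2)) \<ominus> (fq_Q1 \<oplus> (fq_t \<star> fq_Q2)) = el1 TRp1"
proof -
  have "(fq_A1 \<oplus> (fq_t \<star> fq_A2)) \<ominus> (fq_Q1 \<oplus> (fq_t \<star> fq_Q2)) = fq_R1 \<oplus> (fq_t \<star> fq_R2)"
    unfolding fq_A1_def fq_A2_def fq_mul_add_right
    by (rule ext)+ (simp add: fq_add_app fq_sub_app)
  also have "\<dots> = el1 TRp1"
    unfolding TR1_eq TR2_eq t_el el0_mul_el1 el1_add
    by (rule arg_cong[where f=el1], rule tab_ext; elim disjE conjE; simp add: all_bool_eq evsimps TR1_def TR2_def TRp1_def)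
  finally show ?thesis .
qed

lemma Rp2_eq: "(fq_A2 \<ominus> (fq_t \<star> fq_A1)) \<ominus> (fq_Q2 \<ominus> (fq_t \<star> fq_Q1)) = el1 TRp2"
proof -
  have "(fq_A2 \<ominus> (fq_t \<star> fq_A1)) \<ominus> (fq_Q2 \<ominus> (fq_t \<star> fq_Q1)) = fq_R2 \<ominus> (fq_t \<star> fq_R1)"
    unfolding fq_A1_def fq_A2_def fq_mul_add_right
    by (rule ext)+ (simp add: fq_add_app fq_sub_app)
  also have "\<dots> = el1 TRp2"
    unfolding TR1_eq TR2_eq t_el el0_mul_el1 el1_sub
    by (rule arg_cong[where f=el1], rule tab_ext; elim disjE conjE; simp add: all_bool_eq evsimps TR1_def TR2_def TRp2_def)
  finally show ?thesis .
qed

lemma X1_eq: "el1 TRp1 \<star> cinv (el0 eQp1) = el1 TX1"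
  unfolding cinv_el0 el1_mul_el0 by (rule arg_cong[where f=el1], rule tab_ext; elim disjE conjE; simp add: all_bool_eq evsimps TRp1_def eQp1_def TX1_def)
lemma X2_eq: "el1 TRp2 \<star> cinv (el0 eQp2) = el1 TX2"
  unfolding cinv_el0 el1_mul_el0 by (rule arg_cong[where f=el1], rule tab_ext; elim disjE conjE; simp add: all_bool_eq evsimps TRp2_def eQp2_def TX2_def)


lemmas evs2 = mL_def mR_def m0_def fq_mul_def mulc_el0_left mulc_el0_right sum_UNIV_bool
  mul_sign_def bn_def

lemma mL_nQp1: "mL (\<lambda>tau a b. - eQp1 tau a b) h tau a b c =
   - ((-1)^(io1 c + bn (\<not>a)) * h tau (\<not>a) b c) - (if tau then (-1)^(io2 c + bn a + bn (\<not>b)) * h False a (\<not>b) c else 0)"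
  by (cases tau; cases a; cases b; simp add: evs2 eQp1_def)

lemma mR_Qp1: "mR h eQp1 tau a b c =
   (-1)^(bn b + bn (\<not>a)) * h tau (\<not>a) b c + (if tau then (-1)^(bn (\<not>b)) * h False a (\<not>b) c else 0)"
  by (cases tau; cases a; cases b; simp add: evs2 eQp1_def)

lemma mL_nQp2: "mL (\<lambda>tau a b. - eQp2 tau a b) h tau a b c =
   - ((-1)^(io2 c + bn a + bn (\<not>b)) * h tau a (\<not>b) c) + (if tau then (-1)^(io1 c + bn (\<not>a)) * h False (\<not>a) b c else 0)"
  by (cases tau; cases a; cases b; simp add: evs2 eQp2_def)

lemma mR_Qp2: "mR h eQp2 tau a b c =
   (-1)^(bn (\<not>b)) * h tau a (\<not>b) c - (if tau then (-1)^(bn b + bn (\<not>a)) * h False (\<not>a) b c else 0)"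
  by (cases tau; cases a; cases b; simp add: evs2 eQp2_def)

lemma Y10_eq: "part 0 (el0 eQp1) (el1 TX1) = el1 TY10"
  unfolding part_el by (rule arg_cong[where f=el1], rule tab_ext; elim disjE conjE; simp add: all_bool_eq mL_nQp1 mR_Qp1 mL_nQp2 mR_Qp2 bn_def io1_def io2_def TX1_def TY10_def)

lemma Y11_eq: "part (Suc 0) (el0 eQp1) (el1 TX1) = el1 TY11"
  unfolding part_el by (rule arg_cong[where f=el1], rule tab_ext; elim disjE conjE; simp add: all_bool_eq mL_nQp1 mR_Qp1 mL_nQp2 mR_Qp2 bn_def io1_def io2_def TX1_def TY11_def)

lemma Y20_eq: "part 0 (el0 eQp1) (el1 TX2) = el1 TY20"
  unfolding part_el by (rule arg_cong[where f=el1], rule tab_ext; elim disjE conjE; simp add: all_bool_eq mL_nQp1 mR_Qp1 mL_nQp2 mR_Qp2 bn_def io1_def io2_def TX2_def TY20_def)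

lemma Y21_eq: "part (Suc 0) (el0 eQp1) (el1 TX2) = el1 TY21"
  unfolding part_el by (rule arg_cong[where f=el1], rule tab_ext; elim disjE conjE; simp add: all_bool_eq mL_nQp1 mR_Qp1 mL_nQp2 mR_Qp2 bn_def io1_def io2_def TX2_def TY21_def)

lemma Z1_eq: "part 0 (el0 eQp2) (el1 TY10) = el1 (hk cc 1)"
  unfolding part_el by (rule arg_cong[where f=el1], rule tab_ext; elim disjE conjE; simp add: all_bool_eq mL_nQp1 mR_Qp1 mL_nQp2 mR_Qp2 bn_def io1_def io2_def TY10_def hk_def cc_def)

lemma Z2_eq: "part (Suc 0) (el0 eQp2) (el1 TY10) = el1 (hk cc 2)"
  unfolding part_el by (rule arg_cong[where f=el1], rule tab_ext; elim disjE conjE; simp add: all_bool_eq mL_nQp1 mR_Qp1 mL_nQp2 mR_Qp2 bn_def io1_def io2_def TY10_def hk_def cc_def)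

lemma Z3_eq: "part 0 (el0 eQp2) (el1 TY11) = el1 (hk cc 3)"
  unfolding part_el by (rule arg_cong[where f=el1], rule tab_ext; elim disjE conjE; simp add: all_bool_eq mL_nQp1 mR_Qp1 mL_nQp2 mR_Qp2 bn_def io1_def io2_def TY11_def hk_def cc_def)

lemma Z4_eq: "part (Suc 0) (el0 eQp2) (el1 TY11) = el1 (hk cc 4)"
  unfolding part_el by (rule arg_cong[where f=el1], rule tab_ext; elim disjE conjE; simp add: all_bool_eq mL_nQp1 mR_Qp1 mL_nQp2 mR_Qp2 bn_def io1_def io2_def TY11_def hk_def cc_def)

lemma Z5_eq: "part 0 (el0 eQp2) (el1 TY20) = el1 (hk cc 5)"
  unfolding part_el by (rule arg_cong[where f=el1], rule tab_ext; elim disjE conjE; simp add: all_bool_eq mL_nQp1 mR_Qp1 mL_nQp2 mR_Qp2 bn_def io1_def io2_def TY20_def hk_def cc_def)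

lemma Z6_eq: "part (Suc 0) (el0 eQp2) (el1 TY20) = el1 (hk cc 6)"
  unfolding part_el by (rule arg_cong[where f=el1], rule tab_ext; elim disjE conjE; simp add: all_bool_eq mL_nQp1 mR_Qp1 mL_nQp2 mR_Qp2 bn_def io1_def io2_def TY20_def hk_def cc_def)

lemma Z7_eq: "part 0 (el0 eQp2) (el1 TY21) = el1 (hk cc 7)"
  unfolding part_el by (rule arg_cong[where f=el1], rule tab_ext; elim disjE conjE; simp add: all_bool_eq mL_nQp1 mR_Qp1 mL_nQp2 mR_Qp2 bn_def io1_def io2_def TY21_def hk_def cc_def)

lemma Z8_eq: "part (Suc 0) (el0 eQp2) (el1 TY21) = el1 (hk cc 8)"
  unfolding part_el by (rule arg_cong[where f=el1], rule tab_ext; elim disjE conjE; simp add: all_bool_eq mL_nQp1 mR_Qp1 mL_nQp2 mR_Qp2 bn_def io1_def io2_def TY21_def hk_def cc_def)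

lemma split_var_p: "k \<in> {1..8} \<Longrightarrow> split_var (el0 eQp1) (el0 eQp2) (el1 TRp1) (el1 TRp2) k = el1 (hk cc k)"
  by (drule c_cases, elim disjE) (simp_all add: split_var_def io1_def io2_def X1_eq X2_eq Y10_eq Y11_eq Y20_eq Y21_eq
      Z1_eq Z2_eq Z3_eq Z4_eq Z5_eq Z6_eq Z7_eq Z8_eq)

definition proj0 :: "fq_el \<Rightarrow> fq_el" where
  "proj0 x = (\<lambda>tau w a b. if tau then 0 else x False w a b)"

lemma proj0_mul: "proj0 (x \<star> y) = proj0 x \<star> proj0 y"
  by (rule ext)+ (simp add: proj0_def fq_mul_def mulc_def)
lemma proj0_add: "proj0 (x \<oplus> y) = proj0 x \<oplus> proj0 y"
  by (rule ext)+ (simp add: proj0_def fq_add_def)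
lemma proj0_sub: "proj0 (x \<ominus> y) = proj0 x \<ominus> proj0 y"
  by (rule ext)+ (simp add: proj0_def fq_sub_def)
lemma proj0_smul: "proj0 (fq_smul r x) = fq_smul r (proj0 x)"
  by (rule ext)+ (simp add: proj0_def fq_smul_def)
lemma proj0_cinv: "proj0 (cinv x) = cinv (proj0 x)"
  by (simp add: cinv_def proj0_smul)
lemma proj0_part: "proj0 (part i Q X) = part i (proj0 Q) (proj0 X)"
  by (simp add: part_def part0_def part1_def proj0_smul proj0_add proj0_sub proj0_mul proj0_cinv)
lemma proj0_split_var: "proj0 (split_var Q1 Q2 R1 R2 k) = split_var (proj0 Q1) (proj0 Q2) (proj0 R1) (proj0 R2) k"
  by (simp add: split_var_def Let_def proj0_part proj0_mul proj0_cinv)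

lemma proj0_el0: "proj0 (el0 e) = el0 (\<lambda>tau a b. if tau then 0 else e False a b)"
  by (rule ext)+ (simp add: proj0_def el0_def)
lemma proj0_el1: "proj0 (el1 h) = el1 (\<lambda>tau a b c. if tau then 0 else h False a b c)"
  by (rule ext)+ (simp add: proj0_def el1_def split: list.splits)

lemma proj_Qp1: "proj0 (el0 eQp1) = fq_Q1"
  unfolding proj0_el0 Q1_el by (rule arg_cong[where f=el0], (rule ext)+, auto simp: eQp1_def)
lemma proj_Qp2: "proj0 (el0 eQp2) = fq_Q2"
  unfolding proj0_el0 Q2_el by (rule arg_cong[where f=el0], (rule ext)+, auto simp: eQp2_def)
lemma proj_Rp1: "proj0 (el1 TRp1) = fq_A1 \<ominus> fq_Q1"
proof -
  have "fq_A1 \<ominus> fq_Q1 = fq_R1" unfolding fq_A1_def by (rule ext)+ (simp add: fq_add_app fq_sub_app)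
  then show ?thesis unfolding TR1_eq proj0_el1
    by simp (rule arg_cong[where f=el1], (rule ext)+, auto simp: TR1_def TRp1_def)
qed
lemma proj_Rp2: "proj0 (el1 TRp2) = fq_A2 \<ominus> fq_Q2"
proof -
  have "fq_A2 \<ominus> fq_Q2 = fq_R2" unfolding fq_A2_def by (rule ext)+ (simp add: fq_add_app fq_sub_app)
  then show ?thesis unfolding TR2_eq proj0_el1
    by simp (rule arg_cong[where f=el1], (rule ext)+, auto simp: TR2_def TRp2_def)
qed

lemma split_var_0: "k \<in> {1..8} \<Longrightarrow> split_var fq_Q1 fq_Q2 (fq_A1 \<ominus> fq_Q1) (fq_A2 \<ominus> fq_Q2) k = el1 (hk (\<lambda>_ _. 0) k)"
proof -
  assume k: "k \<in> {1..8}"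
  have "split_var fq_Q1 fq_Q2 (fq_A1 \<ominus> fq_Q1) (fq_A2 \<ominus> fq_Q2) k = proj0 (el1 (hk cc k))"
    using split_var_p[OF k] proj0_split_var[of "el0 eQp1" "el0 eQp2" "el1 TRp1" "el1 TRp2" k]
    by (simp add: proj_Qp1 proj_Qp2 proj_Rp1 proj_Rp2)
  also have "\<dots> = el1 (hk (\<lambda>_ _. 0) k)"
    unfolding proj0_el1 by (rule arg_cong[where f=el1], (rule ext)+, auto simp: hk_def)
  finally show ?thesis .
qed

lemma rotQ: "rot (fq_Q1, fq_Q2) = (el0 eQp1, el0 eQp2)"
  by (simp add: rot_def Qp1_eq Qp2_eq)
lemma rotA: "fst (rot (fq_A1, fq_A2)) \<ominus> el0 eQp1 = el1 TRp1" "snd (rot (fq_A1, fq_A2)) \<ominus> el0 eQp2 = el1 TRp2"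
  using Rp1_eq Rp2_eq by (simp_all add: rot_def Qp1_eq Qp2_eq)


fun Dw :: "(nat \<Rightarrow> nat \<Rightarrow> real) \<Rightarrow> nat list \<Rightarrow> nat list \<Rightarrow> real" where
  "Dw C [] w = 0"
| "Dw C (k#u) [] = 0"
| "Dw C (k#u) (c#w) = (if c = k then Dw C u w else 0) + (if w = u then C k c * mul_sign True True w False False else 0)"

lemma fq_prod_Cons: "fq_prod (x # xs) = x \<star> fq_prod xs"
  by (simp add: fq_prod_def)

lemma prod_hk: "fq_prod (map (\<lambda>k. el1 (hk C k)) u) tau w a b =
  (if \<not> tau then (if w = u \<and> \<not> a \<and> \<not> b then 1 else 0) else if a \<and> b then Dw C u w else 0)"
proof (induction u arbitrary: tau w a b)
  case Nil
  show ?case by (cases w) (auto simp: fq_prod_def fq_one_def)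
next
  case (Cons k u)
  show ?case
  proof (cases w)
    case Nil
    then show ?thesis by (simp add: fq_prod_Cons fq_mul_def mulc_el1_left_Nil)
  next
    case (Cons c w')
    then show ?thesis
      by (cases tau; cases a; cases b; simp add: fq_prod_Cons fq_mul_def mulc_el1_left_Cons
          sum_UNIV_bool Cons.IH; simp add: hk_def mul_sign_def bn_def)
  qed
qed

lemma Dw_zero: "Dw (\<lambda>_ _. 0) u w = 0"
proof (induction u arbitrary: w)
  case (Cons k u)
  show ?case by (cases w) (simp_all add: Cons.IH)
qed simp

lemma Dw_len: "Dw C u w \<noteq> 0 \<Longrightarrow> length u = length w"
  by (induction C u w rule: Dw.induct) (auto split: if_splits)

lemma finite_words_upto: "finite (words_upto n)"
  unfolding words_upto_def by (rule finite_lists_length_le) simp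

lemma ser_eval_cong: assumes "\<And>k. k \<in> {1..8} \<Longrightarrow> x k = y k" shows "ser_eval f x = ser_eval f y"
  unfolding ser_eval_def
proof (intro ext sum.cong refl)
  fix tau and w :: "nat list" and a b and u :: "nat list" assume "u \<in> words_upto (length w)"
  then have m: "map x u = map y u" using assms by (auto simp: words_upto_def intro!: map_cong)
  show "f u * fq_prod (map x u) tau w a b = f u * fq_prod (map y u) tau w a b" by (simp only: m)
qed

lemma sum_delta_mult: "finite S \<Longrightarrow> (\<Sum>u\<in>S. (f u::real) * (if w = u then 1 else 0)) = (if w \<in> S then f w else 0)"
proof -
  assume "finite S"
  have "(\<Sum>u\<in>S. (f u::real) * (if w = u then 1 else 0)) = (\<Sum>u\<in>S. if w = u then f u else 0)"
    by (rule sum.cong) auto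
  also have "\<dots> = (if w \<in> S then f w else 0)" using \<open>finite S\<close> by (rule sum.delta')
  finally show ?thesis .
qed

lemma ser_eval_hk: "ser_eval f (\<lambda>k. el1 (hk C k)) tau w a b =
  (if \<not> tau then (if \<not> a \<and> \<not> b \<and> set w \<subseteq> {1..8} then f w else 0)
   else if a \<and> b then (\<Sum>u\<in>words_upto (length w). f u * Dw C u w) else 0)"
proof -
  have e: "ser_eval f (\<lambda>k. el1 (hk C k)) tau w a b = (\<Sum>u\<in>words_upto (length w). f u *
     (if \<not> tau then (if w = u \<and> \<not> a \<and> \<not> b then 1 else 0) else if a \<and> b then Dw C u w else 0))"
    unfolding ser_eval_def by (simp add: prod_hk)
  show ?thesis
  proof (cases tau)
    case False
    then show ?thesis unfolding e
      using sum_delta_mult[OF finite_words_upto, of f w "length w"]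
      by (cases "a \<or> b") (auto simp: words_upto_def)
  qed (unfold e, cases "a \<and> b", auto)
qed

definition Sf :: "ncseries \<Rightarrow> nat list \<Rightarrow> real" where
  "Sf f w = (\<Sum>u\<in>words_upto (length w). f u * Dw cc u w)"

lemma Ev: "ser_at f fq_Q1 fq_Q2 fq_A1 fq_A2 = (\<lambda>tau w a b. if \<not>tau \<and> \<not>a \<and> \<not>b \<and> set w \<subseteq> {1..8} then f w else 0)"
proof -
  have "ser_at f fq_Q1 fq_Q2 fq_A1 fq_A2 = ser_eval f (\<lambda>k. el1 (hk (\<lambda>_ _. 0) k))"
    unfolding ser_at_def by (rule ser_eval_cong) (rule split_var_0)
  then show ?thesis by (auto simp: ser_eval_hk Dw_zero intro!: ext)
qed

lemma Epv: "ser_at f (el0 eQp1) (el0 eQp2) (fst (rot (fq_A1, fq_A2))) (snd (rot (fq_A1, fq_A2))) =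
   (\<lambda>tau w a b. if \<not>tau then (if \<not>a \<and> \<not>b \<and> set w \<subseteq> {1..8} then f w else 0) else if a \<and> b then Sf f w else 0)"
proof -
  have "ser_at f (el0 eQp1) (el0 eQp2) (fst (rot (fq_A1, fq_A2))) (snd (rot (fq_A1, fq_A2))) = ser_eval f (\<lambda>k. el1 (hk cc k))"
    unfolding ser_at_def rotA by (rule ser_eval_cong) (rule split_var_p)
  then show ?thesis by (auto simp: ser_eval_hk Sf_def intro!: ext)
qed

abbreviation "EE f \<equiv> (\<lambda>tau w a b. if \<not>tau \<and> \<not>a \<and> \<not>b \<and> set w \<subseteq> {1..8} then f w else (0::real))"
abbreviation "EP f \<equiv> (\<lambda>tau w a b. if \<not>tau then (if \<not>a \<and> \<not>b \<and> set w \<subseteq> {1..8} then f w else 0) else if a \<and> b then Sf f w else (0::real))"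

lemma orth_scal: "orth_inv (Scalar f) = (EE f = EP f)"
  by (simp add: orth_inv_def Let_def rotQ Ev Epv)
lemma orth_pseudo: "orth_inv (Pseudoscalar f) = (EE f \<star> (fq_Q1 \<star> fq_Q2) = EP f \<star> (el0 eQp1 \<star> el0 eQp2))"
  by (simp add: orth_inv_def Let_def rotQ Ev Epv)
lemma orth_vect: "orth_inv (Vectorial f1 f2) = (rot (EE f1 \<star> fq_Q1, EE f2 \<star> fq_Q2) = (EP f1 \<star> el0 eQp1, EP f2 \<star> el0 eQp2))"
  by (simp add: orth_inv_def Let_def rotQ Ev Epv)

lemma scal: "orth_inv (Scalar f) \<Longrightarrow> Sf f w = 0"
  unfolding orth_scal
  by (drule fun_cong[where x=True], drule fun_cong[where x=w], drule fun_cong[where x=True], drule fun_cong[where x=True]) simp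

lemma pseudo: "orth_inv (Pseudoscalar f) \<Longrightarrow> Sf f w = 0"
  unfolding orth_pseudo Q1_el Q2_el el0_mul_el0
  apply (drule fun_cong[where x=True], drule fun_cong[where x=w], drule fun_cong[where x=False], drule fun_cong[where x=False])
  apply (simp add: fq_mul_def mulc_el0_right sum_UNIV_bool m0_def mulc_el0_left mul_sign_def bn_def eQp1_def eQp2_def)
  done

lemma fun_cong4: "f = g \<Longrightarrow> f a b c d = g a b c d" by simp

lemma vect: assumes o: "orth_inv (Vectorial f1 f2)" and sw: "set w \<subseteq> {1..8}"
  shows "Sf f1 w = f2 w - f1 w \<and> Sf f2 w = f1 w - f2 w"
proof -
  have e1: "(EE f1 \<star> fq_Q1) \<oplus> (fq_t \<star> (EE f2 \<star> fq_Q2)) = EP f1 \<star> el0 eQp1"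
    using o by (simp add: orth_vect rot_def)
  have e2: "(EE f2 \<star> fq_Q2) \<ominus> (fq_t \<star> (EE f1 \<star> fq_Q1)) = EP f2 \<star> el0 eQp2"
    using o by (simp add: orth_vect rot_def)
  have h1: "((EE f1 \<star> fq_Q1) \<oplus> (fq_t \<star> (EE f2 \<star> fq_Q2))) True w False True = (EP f1 \<star> el0 eQp1) True w False True"
    using e1 by (rule fun_cong4)
  have h2: "((EE f2 \<star> fq_Q2) \<ominus> (fq_t \<star> (EE f1 \<star> fq_Q1))) True w True False = (EP f2 \<star> el0 eQp2) True w True False"
    using e2 by (rule fun_cong4)
  show ?thesis using h1 h2 sw
    unfolding Q1_el Q2_el t_el
    by (simp add: fq_add_app fq_sub_app fq_mul_def mulc_el0_right sum_UNIV_bool mulc_el0_left mul_sign_def bn_def eQp1_def eQp2_def)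
qed


definition W :: "nat \<Rightarrow> nat list set" where "W r = {w. set w \<subseteq> {1..8::nat} \<and> length w = r}"

fun rprod :: "nat list \<Rightarrow> nat list \<Rightarrow> real" where
  "rprod (c#w) (j#i) = r_of_circ c j * rprod w i"
| "rprod _ _ = 1"

lemma finite_W: "finite (W r)"
  unfolding W_def by (rule finite_lists_length_eq) simp

lemma prod_rprod: "length w = length i \<Longrightarrow> (\<Prod>k<length i. r_of_circ (w!k) (i!k)) = rprod w i"
proof (induction i arbitrary: w)
  case Nil then show ?case by simp
next
  case (Cons j i)
  then obtain c w' where w: "w = c # w'" "length w' = length i" by (cases w) auto
  show ?case using Cons.IH[OF w(2)] unfolding length_Cons prod.lessThan_Suc_shift by (simp add: w)
qed

lemma ptilde_rprod: "ptilde f i = (\<Sum>w\<in>W (length i). f w * rprod w i)"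
  unfolding ptilde_def W_def by (rule sum.cong) (auto simp: prod_rprod)

lemma W_Suc_sum: "(\<Sum>w\<in>W (Suc r). g w) = (\<Sum>c\<in>{1..8}. \<Sum>w\<in>W r. g (c # w))"
proof -
  have e: "W (Suc r) = (\<lambda>(xs, n). n # xs) ` (W r \<times> {1..8})"
    unfolding W_def by (rule lists_length_Suc_eq)
  have inj: "inj_on (\<lambda>(xs, n). n # xs) (W r \<times> {1..8::nat})" by (auto simp: inj_on_def)
  have "(\<Sum>w\<in>W (Suc r). g w) = (\<Sum>p\<in>W r \<times> {1..8}. g (snd p # fst p))"
    unfolding e by (subst sum.reindex[OF inj]) (simp add: case_prod_beta)
  also have "\<dots> = (\<Sum>(w, c)\<in>W r \<times> {1..8}. g (c # w))"
    by (simp add: case_prod_beta)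
  also have "\<dots> = (\<Sum>w\<in>W r. \<Sum>c\<in>{1..8}. g (c # w))"
    by (rule sum.cartesian_product[symmetric])
  also have "\<dots> = (\<Sum>c\<in>{1..8}. \<Sum>w\<in>W r. g (c # w))"
    by (rule sum.swap)
  finally show ?thesis .
qed

lemma W_0: "W 0 = {[]}" by (auto simp: W_def)

lemma ms_Cons: "mul_sign True True (c # u) False False = (-1)^(io1 c + io2 c) * mul_sign True True u False False"
  by (simp add: mul_sign_def bn_def power_add)

lemma sg_rprod: "set i \<subseteq> {4,5} \<Longrightarrow> length u = length i \<Longrightarrow> mul_sign True True u False False * rprod u i = rprod u i"
proof (induction i arbitrary: u)
  case Nil then show ?case by (simp add: mul_sign_def bn_def)
next
  case (Cons j i)
  then obtain c u' where u: "u = c # u'" "length u' = length i" by (cases u) auto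
  have IH: "mul_sign True True u' False False * rprod u' i = rprod u' i"
    using Cons.IH[OF _ u(2)] Cons.prems by simp
  have j: "j = 4 \<or> j = 5" using Cons.prems by auto
  have "(-1::real)^(io1 c + io2 c) * r_of_circ c j = r_of_circ c j"
  proof (cases "c \<in> {1,4,5,8}")
    case True then show ?thesis using j by (auto simp: io1_def io2_def)
  next
    case False then show ?thesis using j by (auto simp: r_of_circ_def)
  qed
  then have "(-1::real)^(io1 c + io2 c) * r_of_circ c j * (mul_sign True True u' False False * rprod u' i)
      = r_of_circ c j * rprod u' i" by (simp only: IH)
  then show ?case unfolding u by (simp add: ms_Cons mult_ac)
qed

lemma cc_eig: "k \<in> {1..8} \<Longrightarrow> j \<in> {4,5} \<Longrightarrow> (\<Sum>c\<in>{1..8}. cc k c * r_of_circ c j) = (if j = 4 then -2 else 2) * r_of_circ k j"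
proof -
  assume k: "k \<in> {1..8}" and j: "j \<in> {4,5}"
  have e: "{1..8::nat} = {1,2,3,4,5,6,7,8}" by auto
  from j have j': "j = 4 \<or> j = 5" by auto
  show ?thesis using c_cases[OF k] j' unfolding e
    by (elim disjE; simp add: cc_def r_of_circ_def)
qed

lemma Mult_diff_Cons: "Mult_diff (j # i) = Mult_diff i + (if j = 4 then 1 else if j = 5 then -1 else 0)"
  by (simp add: Mult_diff_def)


lemma G: "set u \<subseteq> {1..8} \<Longrightarrow> length u = length i \<Longrightarrow> set i \<subseteq> {4,5} \<Longrightarrow>
  (\<Sum>w\<in>W (length i). Dw cc u w * rprod w i) = -2 * real_of_int (Mult_diff i) * rprod u i"
proof (induction i arbitrary: u)
  case Nil
  then show ?case by (simp add: W_0 Mult_diff_def)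
next
  case (Cons j i)
  then obtain k u' where u: "u = k # u'" "length u' = length i" by (cases u) auto
  have k: "k \<in> {1..8}" and u'8: "set u' \<subseteq> {1..8}" using Cons.prems u by auto
  have j: "j \<in> {4,5}" and i45: "set i \<subseteq> {4,5}" using Cons.prems by auto
  have u'W: "u' \<in> W (length i)" using u u'8 by (simp add: W_def)
  define r where "r = length i"
  have IH: "(\<Sum>w\<in>W r. Dw cc u' w * rprod w i) = -2 * real_of_int (Mult_diff i) * rprod u' i"
    using Cons.IH[OF u'8 u(2) i45] by (simp add: r_def)
  have "(\<Sum>w\<in>W (length (j#i)). Dw cc u w * rprod w (j#i))
     = (\<Sum>c\<in>{1..8}. \<Sum>w\<in>W r. Dw cc (k#u') (c#w) * (r_of_circ c j * rprod w i))"
    by (simp add: r_def W_Suc_sum u)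
  also have "\<dots> = (\<Sum>c\<in>{1..8}. \<Sum>w\<in>W r. (if c = k then Dw cc u' w * (r_of_circ c j * rprod w i) else 0)
        + (if w = u' then cc k c * mul_sign True True w False False * (r_of_circ c j * rprod w i) else 0))"
    by (intro sum.cong refl) (simp add: distrib_right)
  also have "\<dots> = (\<Sum>c\<in>{1..8}. (if c = k then r_of_circ c j * (\<Sum>w\<in>W r. Dw cc u' w * rprod w i) else 0)
        + cc k c * r_of_circ c j * (mul_sign True True u' False False * rprod u' i))"
  proof (intro sum.cong refl)
    fix c
    have "(\<Sum>w\<in>W r. (if c = k then Dw cc u' w * (r_of_circ c j * rprod w i) else 0))
       = (if c = k then r_of_circ c j * (\<Sum>w\<in>W r. Dw cc u' w * rprod w i) else 0)"
      by (simp add: sum_distrib_left mult_ac)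
    moreover have "(\<Sum>w\<in>W r. (if w = u' then cc k c * mul_sign True True w False False * (r_of_circ c j * rprod w i) else 0))
       = cc k c * r_of_circ c j * (mul_sign True True u' False False * rprod u' i)"
      using u'W finite_W[of r] by (simp add: sum.delta r_def mult_ac)
    ultimately show "(\<Sum>w\<in>W r. (if c = k then Dw cc u' w * (r_of_circ c j * rprod w i) else 0)
        + (if w = u' then cc k c * mul_sign True True w False False * (r_of_circ c j * rprod w i) else 0))
      = (if c = k then r_of_circ c j * (\<Sum>w\<in>W r. Dw cc u' w * rprod w i) else 0)
        + cc k c * r_of_circ c j * (mul_sign True True u' False False * rprod u' i)"
      by (simp add: sum.distrib)
  qed
  also have "\<dots> = r_of_circ k j * (\<Sum>w\<in>W r. Dw cc u' w * rprod w i)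
        + (\<Sum>c\<in>{1..8}. cc k c * r_of_circ c j) * rprod u' i"
    using k by (simp add: sum.distrib sum.delta' sum_distrib_right[symmetric] sg_rprod[OF i45 u(2)])
  also have "\<dots> = r_of_circ k j * (-2 * real_of_int (Mult_diff i) * rprod u' i)
        + (if j = 4 then -2 else 2) * r_of_circ k j * rprod u' i"
    by (simp only: IH cc_eig[OF k j])
  also have "\<dots> = -2 * real_of_int (Mult_diff (j#i)) * rprod u (j#i)"
    using j by (auto simp: Mult_diff_Cons u algebra_simps)
  finally show ?case .
qed

lemma key: assumes i45: "set i \<subseteq> {4,5}"
  shows "(\<Sum>w\<in>W (length i). Sf f w * rprod w i) = -2 * real_of_int (Mult_diff i) * ptilde f i"
proof -
  let ?U = "words_upto (length i)"
  have "(\<Sum>w\<in>W (length i). Sf f w * rprod w i) = (\<Sum>w\<in>W (length i). \<Sum>u\<in>?U. f u * (Dw cc u w * rprod w i))"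
    by (intro sum.cong refl) (auto simp: Sf_def W_def sum_distrib_right mult.assoc)
  also have "\<dots> = (\<Sum>u\<in>?U. f u * (\<Sum>w\<in>W (length i). Dw cc u w * rprod w i))"
    by (subst sum.swap) (simp add: sum_distrib_left)
  also have "\<dots> = (\<Sum>u\<in>?U. if length u = length i then f u * (-2 * real_of_int (Mult_diff i) * rprod u i) else 0)"
  proof (intro sum.cong refl)
    fix u assume uU: "u \<in> ?U"
    show "f u * (\<Sum>w\<in>W (length i). Dw cc u w * rprod w i) =
      (if length u = length i then f u * (-2 * real_of_int (Mult_diff i) * rprod u i) else 0)"
    proof (cases "length u = length i")
      case True
      then show ?thesis using G[of u i] uU i45 by (simp add: words_upto_def)
    next
      case False
      have "\<And>w. w \<in> W (length i) \<Longrightarrow> Dw cc u w = 0"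
        using False Dw_len by (force simp: W_def)
      then show ?thesis using False by simp
    qed
  qed
  also have "\<dots> = (\<Sum>u\<in>{u\<in>?U. length u = length i}. f u * (-2 * real_of_int (Mult_diff i) * rprod u i))"
    by (rule sum.inter_filter[symmetric]) (rule finite_words_upto)
  also have "{u\<in>?U. length u = length i} = W (length i)"
    by (auto simp: words_upto_def W_def)
  also have "(\<Sum>u\<in>W (length i). f u * (-2 * real_of_int (Mult_diff i) * rprod u i)) = -2 * real_of_int (Mult_diff i) * ptilde f i"
    by (simp add: ptilde_rprod sum_distrib_left mult_ac)
  finally show ?thesis .
qed

theorem mainTheorem1:
  fixes Xi :: fqop and s :: nat and \<iota> :: "nat list"
  assumes "orth_inv Xi"
    and "s \<in> components Xi"
    and "set \<iota> \<subseteq> {4, 5}"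
    and "Mult_diff \<iota> \<noteq> 0"
    and "s \<in> {0, 12} \<or> Mult_diff \<iota> \<noteq> 1"
  shows "ptilde (series Xi s) \<iota> = 0"
proof -
  let ?d = "real_of_int (Mult_diff \<iota>)"
  have d0: "?d \<noteq> 0" using assms(4) by simp
  show ?thesis
  proof (cases Xi)
    case (Scalar f)
    have "-2 * ?d * ptilde f \<iota> = 0"
      using key[OF assms(3), of f, symmetric] scal[of f] assms(1) Scalar by simp
    then show ?thesis using Scalar d0 by simp
  next
    case (Pseudoscalar f)
    have "-2 * ?d * ptilde f \<iota> = 0"
      using key[OF assms(3), of f, symmetric] pseudo[of f] assms(1) Pseudoscalar by simp
    then show ?thesis using Pseudoscalar d0 by simp
  next
    case (Vectorial f1 f2)
    have o: "orth_inv (Vectorial f1 f2)" using assms(1) Vectorial by simp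
    have d1: "?d \<noteq> 1" using assms(2,5) Vectorial by auto
    have s1: "-2 * ?d * ptilde f1 \<iota> = ptilde f2 \<iota> - ptilde f1 \<iota>"
    proof -
      have "-2 * ?d * ptilde f1 \<iota> = (\<Sum>w\<in>W (length \<iota>). Sf f1 w * rprod w \<iota>)"
        using key[OF assms(3)] by simp
      also have "\<dots> = (\<Sum>w\<in>W (length \<iota>). (f2 w - f1 w) * rprod w \<iota>)"
        by (intro sum.cong refl) (simp add: vect[OF o] W_def)
      also have "\<dots> = ptilde f2 \<iota> - ptilde f1 \<iota>"
        by (simp add: ptilde_rprod left_diff_distrib sum_subtractf)
      finally show ?thesis .
    qed
    have s2: "-2 * ?d * ptilde f2 \<iota> = ptilde f1 \<iota> - ptilde f2 \<iota>"
    proof -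
      have "-2 * ?d * ptilde f2 \<iota> = (\<Sum>w\<in>W (length \<iota>). Sf f2 w * rprod w \<iota>)"
        using key[OF assms(3)] by simp
      also have "\<dots> = (\<Sum>w\<in>W (length \<iota>). (f1 w - f2 w) * rprod w \<iota>)"
        by (intro sum.cong refl) (simp add: vect[OF o] W_def)
      also have "\<dots> = ptilde f1 \<iota> - ptilde f2 \<iota>"
        by (simp add: ptilde_rprod left_diff_distrib sum_subtractf)
      finally show ?thesis .
    qed
    have "-2 * ?d * (ptilde f1 \<iota> + ptilde f2 \<iota>) = 0" using s1 s2 by (simp add: algebra_simps)
    then have sum0: "ptilde f2 \<iota> = - ptilde f1 \<iota>" using d0 by simp
    then have "(?d - 1) * ptilde f1 \<iota> = 0" using s1 by (simp add: algebra_simps)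
    then have p1: "ptilde f1 \<iota> = 0" using d1 by simp
    then have p2: "ptilde f2 \<iota> = 0" using sum0 by simp
    show ?thesis using Vectorial p1 p2 by simp
  qed
qed

end
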